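(* Let $d$ be an odd positive integer. For $k=0,1$ consider the formal power series $\mathcal A_{1,k}(c_1,c_2,d)=\sum_{r\ge0}\alpha^{r,d}_{1,k}\in\mathbb Z[[c_1,c_2]]$ (so $\alpha^{r,d}_{1,k}$ is its homogeneous part of degree $r+k$, with $\deg c_1=1,\deg c_2=2$). Then $$\mathcal A_{1,0}(c_1,c_2,d)=\frac{d}{\big(1+\frac{d-1}{2}c_1\big)\big(1-\frac{d+1}{2}c_1\big)+d^2c_2},\qquad \mathcal A_{1,1}(c_1,c_2,d)=\frac{1+\frac{d-1}{2}c_1}{\big(1+\frac{d-1}{2}c_1\big)\big(1-\frac{d+1}{2}c_1\big)+d^2c_2}-1.$$
   Context: Ground field $k$ algebraically closed of characteristic $0$ or $>d$. $E$ is the standard representation of $\mathrm{GL}_2$ with Chern classes $c_1,c_2$; $W_n=\mathrm{Sym}^n(E^\vee)$ is the space of binary forms of degree $n$, $\mathrm{GL}_2$ acting by $f\mapsto f\circ A^{-1}$. $T$ is the diagonal torus, $A^*_T=\mathbb Z[l_1,l_2]$, $c_1=-(l_1+l_2)$, $c_2=l_1l_2$. On $\mathbb P(W_n^{\oplus m})$ the equivariant hyperplane class is normalized so that the coordinate hyperplane where the coefficient of $x^{n-j}y^j$ in one summand vanishes has class (hyperplane class)$+(n-j)l_1+jl_2$; $H$ is this class on $\mathbb P(W_d^{\oplus r+1})$, and $A^*_{\mathrm{GL}_2}(\mathbb P(W_d^{\oplus r+1}))=\mathbb Z[c_1,c_2,H]/(P_{r,d}(H))$, $P_{r,d}(H)=\prod_{j=0}^d(H+(d-j)l_1+jl_2)^{r+1}$.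 For $r\ge0$: $\widetilde Z_1=\mathbb P(W_1)\times\mathbb P(W_{d-1}^{\oplus r+1})$, $\pi_1([c],[g_1,\dots,g_{r+1}])=[cg_1,\dots,cg_{r+1}]$, $h_1$ the pullback of the hyperplane class of $\mathbb P(W_1)$, $\alpha^{r,d}_{1,k}(H)=\pi_{1*}(h_1^k)$ identified with its unique homogeneous representative of degree $r+k$ in $\mathbb Z[c_1,c_2,H]$, and $\alpha^{r,d}_{1,k}:=\alpha^{r,d}_{1,k}(\tfrac{d+1}{2}c_1)\in\mathbb Z[c_1,c_2]$. *)

theory Defs
  imports "HOL-Computational_Algebra.Computational_Algebra"
begin

(* Concrete algebraic model of T-equivariant intersection theory on the projective
   spaces P(W_n^{(+)m}), with the torus parameters l1, l2 specialised to arbitrary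
   real numbers.  *)

(* weight of the coordinate x^(n-j) y^j of W_n: hyperplane class H + (n-j) l1 + j l2 *)
definition wt :: "nat \<Rightarrow> real \<Rightarrow> real \<Rightarrow> nat \<Rightarrow> real" where
  "wt n l1 l2 j = real (n - j) * l1 + real j * l2"

(* relation  prod_{j=0}^n (H + (n-j) l1 + j l2)^m  of A_T(P(W_n^{(+)m})) *)
definition rel_poly :: "nat \<Rightarrow> nat \<Rightarrow> real \<Rightarrow> real \<Rightarrow> real poly" where
  "rel_poly n m l1 l2 = (\<Prod>j\<in>{0..n}. [:wt n l1 l2 j, 1:] ^ m)"

definition proj_dim :: "nat \<Rightarrow> nat \<Rightarrow> nat" where
  "proj_dim n m = m * (n + 1) - 1"

(* equivariant integral (pushforward to a point) of a class f(H) on P(W_n^{(+)m}):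
   the coefficient of H^dim in the reduced representative *)
definition eq_integral :: "nat \<Rightarrow> nat \<Rightarrow> real \<Rightarrow> real \<Rightarrow> real poly \<Rightarrow> real" where
  "eq_integral n m l1 l2 f = coeff (f mod rel_poly n m l1 l2) (proj_dim n m)"

(* integral over Z1~ = P(W_1) x P(W_{d-1}^{(+)r+1}) of  h1^k * (pi1^* H)^m,
   where pi1^* H = h1 + h2, expanded binomially; the integral of h1^a h2^b over the
   product is the product of the integrals over the factors *)
definition src_integral :: "nat \<Rightarrow> nat \<Rightarrow> nat \<Rightarrow> nat \<Rightarrow> real \<Rightarrow> real \<Rightarrow> real" where
  "src_integral r d k m l1 l2 =
     (\<Sum>i\<le>m. real (m choose i) * eq_integral 1 1 l1 l2 (monom 1 (k + i))
                 * eq_integral (d - 1) (r + 1) l1 l2 (monom 1 (m - i)))"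

(* alpha^{r,d}_{1,k}(H) = pi_{1*}(h1^k): the reduced representative (degree <= dim)
   determined by the projection formula  int (pi_* x) H^m = int x (pi^* H)^m *)
definition alphaH :: "nat \<Rightarrow> nat \<Rightarrow> nat \<Rightarrow> real \<Rightarrow> real \<Rightarrow> real poly" where
  "alphaH r d k l1 l2 =
     (THE a. degree a \<le> proj_dim d (r + 1) \<and>
        (\<forall>m \<le> proj_dim d (r + 1).
            eq_integral d (r + 1) l1 l2 (a * monom 1 m) = src_integral r d k m l1 l2))"

definition alpha :: "nat \<Rightarrow> nat \<Rightarrow> nat \<Rightarrow> real \<Rightarrow> real \<Rightarrow> real" where
  "alpha r d k l1 l2 = poly (alphaH r d k l1 l2) (real (d + 1) / 2 * (- (l1 + l2)))"

end

theory Submission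
  imports Defs
begin


definition eqI :: "real poly \<Rightarrow> real poly \<Rightarrow> real" where
  "eqI P f = coeff (f mod P) (degree P - 1)"

lemma pcompose_power: "pcompose (p ^ n) q = (pcompose p q) ^ n"
  by (induction n) (simp_all add: pcompose_1 pcompose_mult)

lemma eqI_add: "eqI P (f + g) = eqI P f + eqI P g"
  by (simp add: eqI_def poly_mod_add_left)

lemma eqI_diff: "eqI P (f - g) = eqI P f - eqI P g"
  by (simp add: eqI_def poly_mod_diff_left)

lemma eqI_smult: "eqI P (smult a f) = a * eqI P f"
  by (simp add: eqI_def mod_smult_left)

lemma eqI_0 [simp]: "eqI P 0 = 0"
  by (simp add: eqI_def)

lemma eqI_sum: "eqI P (\<Sum>i\<in>A. f i) = (\<Sum>i\<in>A. eqI P (f i))"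
  by (induction A rule: infinite_finite_induct) (simp_all add: eqI_add)

lemma mod_char:
  fixes f g P q :: "real poly"
  assumes "degree g < degree P" "f = g + P * q"
  shows "f mod P = g"
proof -
  have "f mod P = g mod P" using assms(2) by (simp add: mult.commute)
  then show ?thesis using assms(1) by (simp add: mod_poly_less)
qed

lemma coeff_mult_monic_top:
  fixes g R :: "real poly"
  assumes "degree g \<le> n" "lead_coeff R = 1"
  shows "coeff (g * R) (n + degree R) = coeff g n"
proof (cases "degree g = n")
  case True
  then show ?thesis using coeff_mult_degree_sum[of g R] assms by simp
next
  case False
  then have lt: "degree g < n" using assms by simp
  have "degree (g * R) \<le> degree g + degree R" by (rule degree_mult_le)
  then have "coeff (g * R) (n + degree R) = 0" using lt by (intro coeff_eq_0) simp
  moreover have "coeff g n = 0" using lt by (intro coeff_eq_0) simp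
  ultimately show ?thesis by simp
qed

lemma monic_deg0: "lead_coeff (P::real poly) = 1 \<Longrightarrow> degree P = 0 \<Longrightarrow> P = 1"
  by (metis degree_0_id one_pCons)

lemma eqI_mult_right:
  fixes Q R f :: "real poly"
  assumes Q: "lead_coeff Q = 1" and R: "lead_coeff R = 1"
  shows "eqI (Q * R) (f * R) = eqI Q f"
proof (cases "degree Q = 0")
  case True
  then have "Q = 1" using Q monic_deg0 by blast
  then show ?thesis by (simp add: eqI_def)
next
  case False
  have Q0: "Q \<noteq> 0" "R \<noteq> 0" using Q R by auto
  define g where "g = f mod Q"
  have dg: "degree g < degree Q"
    using False Q0 degree_mod_less[of Q f] unfolding g_def by auto
  have dQR: "degree (Q * R) = degree Q + degree R" using Q0 by (simp add: degree_mult_eq)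
  have "degree (g * R) < degree (Q * R)"
  proof (cases "g = 0")
    case True then show ?thesis using False dQR by simp
  next
    case False
    then show ?thesis using dg Q0 dQR by (simp add: degree_mult_eq)
  qed
  moreover have "f * R = g * R + (Q * R) * (f div Q)"
  proof -
    have fe: "f = g + Q * (f div Q)" unfolding g_def
      using div_mult_mod_eq[of f Q] by (simp add: algebra_simps)
    have "f * R = (g + Q * (f div Q)) * R" using fe by simp
    also have "\<dots> = g * R + (Q * R) * (f div Q)" by (simp add: algebra_simps)
    finally show ?thesis .
  qed
  ultimately have modeq: "(f * R) mod (Q * R) = g * R" by (rule mod_char)
  have idx: "degree (Q * R) - 1 = (degree Q - 1) + degree R" using dQR False by simp
  have "eqI (Q * R) (f * R) = coeff (g * R) (degree (Q * R) - 1)"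
    unfolding eqI_def by (simp only: modeq)
  also have "\<dots> = coeff (g * R) ((degree Q - 1) + degree R)" by (simp only: idx)
  also have "\<dots> = coeff g (degree Q - 1)"
    using dg R by (intro coeff_mult_monic_top) auto
  finally show ?thesis by (simp add: eqI_def g_def)
qed

lemma coeff_pcompose_top:
  fixes g :: "real poly"
  assumes "degree g \<le> n"
  shows "coeff (pcompose g [:c, 1:]) n = coeff g n"
proof (cases "degree g = n")
  case True
  have "degree (pcompose g [:c, 1:]) = degree g" by (simp add: degree_pcompose)
  moreover have "lead_coeff (pcompose g [:c, 1:]) = lead_coeff g"
    by (subst lead_coeff_comp) auto
  ultimately show ?thesis using True by simp
next
  case False
  then have lt: "degree g < n" using assms by simp
  have "degree (pcompose g [:c, 1:]) = degree g" by (simp add: degree_pcompose)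
  then show ?thesis using lt by (simp add: coeff_eq_0)
qed

lemma eqI_shift:
  fixes P f :: "real poly"
  assumes P: "lead_coeff P = 1"
  shows "eqI (pcompose P [:c, 1:]) (pcompose f [:c, 1:]) = eqI P f"
proof (cases "degree P = 0")
  case True
  then have "P = 1" using P monic_deg0 by blast
  then show ?thesis by (simp add: eqI_def pcompose_1)
next
  case False
  have P0: "P \<noteq> 0" using P by auto
  define g where "g = f mod P"
  have dg: "degree g < degree P"
    using False P0 degree_mod_less[of P f] unfolding g_def by auto
  have dPc: "degree (pcompose P [:c, 1:]) = degree P" by (simp add: degree_pcompose)
  have dgc: "degree (pcompose g [:c, 1:]) = degree g" by (simp add: degree_pcompose)
  have "pcompose f [:c, 1:] = pcompose g [:c, 1:] + pcompose P [:c, 1:] * pcompose (f div P) [:c, 1:]"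
    unfolding g_def by (metis add.commute div_mult_mod_eq mult.commute pcompose_add pcompose_mult)
  then have "(pcompose f [:c, 1:]) mod (pcompose P [:c, 1:]) = pcompose g [:c, 1:]"
    using dg dPc dgc by (intro mod_char) auto
  then have "eqI (pcompose P [:c, 1:]) (pcompose f [:c, 1:]) = coeff (pcompose g [:c, 1:]) (degree P - 1)"
    unfolding eqI_def dPc by simp
  also have "\<dots> = coeff g (degree P - 1)" using dg by (intro coeff_pcompose_top) auto
  finally show ?thesis by (simp add: eqI_def g_def)
qed

lemma eqI_monom:
  assumes "N > 0"
  shows "eqI (monom 1 N) f = coeff f (N - 1)"
proof -
  have "f = f mod monom 1 N + monom 1 N * (f div monom 1 N)"
    by (metis add.commute div_mult_mod_eq mult.commute)
  then have "coeff f (N - 1) = coeff (f mod monom 1 N) (N - 1) + coeff (monom 1 N * (f div monom 1 N)) (N - 1)"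
    by (metis coeff_add)
  also have "coeff (monom 1 N * (f div monom 1 N)) (N - 1) = 0"
    using assms by (simp add: coeff_monom_mult)
  finally show ?thesis by (simp add: eqI_def degree_monom_eq)
qed



lemma rel_monic: "lead_coeff (rel_poly n m l1 l2) = 1"
  by (simp add: rel_poly_def lead_coeff_prod lead_coeff_power)

lemma rel_degree: "degree (rel_poly n m l1 l2) = m * (n + 1)"
proof -
  have "degree (rel_poly n m l1 l2) = (\<Sum>j\<in>{0..n}. degree ([:wt n l1 l2 j, 1:] ^ m))"
    unfolding rel_poly_def by (rule degree_prod_eq_sum_degree) auto
  also have "\<dots> = m * (n + 1)" by (simp add: degree_linear_power)
  finally show ?thesis .
qed

lemma eq_integral_eqI: "eq_integral n m l1 l2 f = eqI (rel_poly n m l1 l2) f"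
  by (simp add: eq_integral_def eqI_def rel_degree proj_dim_def)

lemma pcompose_lin: "pcompose [:w, 1:] [:c, 1:] = [:w + c, 1::real:]"
  by (simp add: pcompose_pCons)

lemma rel_split1:
  assumes "d \<ge> 1"
  shows "rel_poly d m l1 l2 = pcompose (rel_poly (d - 1) m l1 l2) [:l1, 1:] * [:real d * l2, 1:] ^ m"
proof -
  have e: "{0..d} = insert d {0..d-1}" using assms by auto
  have "pcompose (rel_poly (d - 1) m l1 l2) [:l1, 1:] = (\<Prod>j\<in>{0..d-1}. [:wt (d-1) l1 l2 j + l1, 1:] ^ m)"
    unfolding rel_poly_def by (simp add: pcompose_prod pcompose_power pcompose_lin)
  also have "\<dots> = (\<Prod>j\<in>{0..d-1}. [:wt d l1 l2 j, 1:] ^ m)"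
  proof (rule prod.cong)
    fix j assume "j \<in> {0..d-1}"
    then have "j \<le> d - 1" by simp
    then have "d - j = Suc (d - 1 - j)" using assms by arith
    then have "wt (d-1) l1 l2 j + l1 = wt d l1 l2 j" unfolding wt_def by (simp add: algebra_simps)
    then show "[:wt (d-1) l1 l2 j + l1, 1:] ^ m = [:wt d l1 l2 j, 1:] ^ m" by simp
  qed simp
  finally show ?thesis unfolding rel_poly_def e using assms
    by (simp add: wt_def mult.commute)
qed

lemma rel_split2:
  assumes "d \<ge> 1"
  shows "rel_poly d m l1 l2 = pcompose (rel_poly (d - 1) m l1 l2) [:l2, 1:] * [:real d * l1, 1:] ^ m"
proof -
  have e: "{0..d} = insert 0 {1..d}" using assms by auto
  have "pcompose (rel_poly (d - 1) m l1 l2) [:l2, 1:] = (\<Prod>j\<in>{0..d-1}. [:wt (d-1) l1 l2 j + l2, 1:] ^ m)"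
    unfolding rel_poly_def by (simp add: pcompose_prod pcompose_power pcompose_lin)
  also have "\<dots> = (\<Prod>j\<in>{0..d-1}. [:wt d l1 l2 (Suc j), 1:] ^ m)"
  proof (rule prod.cong)
    fix j assume "j \<in> {0..d-1}"
    then have "j \<le> d - 1" by simp
    then have "d - Suc j = d - 1 - j" using assms by arith
    then have "wt (d-1) l1 l2 j + l2 = wt d l1 l2 (Suc j)" unfolding wt_def by (simp add: algebra_simps)
    then show "[:wt (d-1) l1 l2 j + l2, 1:] ^ m = [:wt d l1 l2 (Suc j), 1:] ^ m" by simp
  qed simp
  also have "\<dots> = (\<Prod>j\<in>{1..d}. [:wt d l1 l2 j, 1:] ^ m)"
    using assms prod.shift_bounds_cl_Suc_ivl[of "\<lambda>j. [:wt d l1 l2 j, 1:] ^ m" 0 "d-1"] by simp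
  finally show ?thesis unfolding rel_poly_def e using assms
    by (simp add: wt_def mult.commute)
qed

lemma lin_pow_expand:
  "eqI P ([:a, 1:] ^ m) = (\<Sum>i\<le>m. of_nat (m choose i) * a ^ i * eqI P (monom 1 (m - i)))"
proof -
  have "[:a, 1:] ^ m = ([:a:] + monom 1 1) ^ m" by (simp add: monom_altdef)
  also have "\<dots> = (\<Sum>i\<le>m. smult (of_nat (m choose i) * a ^ i) (monom 1 (m - i)))"
    by (subst binomial_ring) (simp add: of_nat_poly monom_power poly_const_pow smult_monom ac_simps)
  finally show ?thesis by (simp add: eqI_sum eqI_smult)
qed

lemma shift_pow: "eqI P ([:- c, 1:] ^ m) = eqI (pcompose P [:c, 1:]) (monom 1 m)"
  if "lead_coeff P = 1"
proof -
  have "pcompose ([:- c, 1:] ^ m) [:c, 1:] = monom 1 m"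
    by (simp add: pcompose_power pcompose_lin monom_altdef)
  then show ?thesis using eqI_shift[OF that, of c "[:- c, 1:] ^ m"] by simp
qed



lemma P1_form: "rel_poly 1 1 l1 l2 = [:l1, 1:] * [:l2, 1:]"
proof -
  have "{0..1::nat} = {0, 1}" by auto
  then show ?thesis by (simp add: rel_poly_def wt_def)
qed

lemma lin_poly:
  fixes g :: "real poly"
  assumes "degree g \<le> 1"
  shows "g = [:coeff g 0, coeff g 1:]"
proof (rule poly_eqI)
  fix n show "coeff g n = coeff [:coeff g 0, coeff g 1:] n"
  proof (cases n)
    case (Suc k)
    then show ?thesis using assms by (cases k) (auto simp: coeff_eq_0)
  qed simp
qed

lemma P1_dist:
  fixes f :: "real poly"
  shows "(l2 - l1) * eqI ([:l1, 1:] * [:l2, 1:]) f = poly f (- l1) - poly f (- l2)"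
proof -
  define P1 where "P1 = [:l1, 1:] * [:l2, 1:]"
  have P10: "P1 \<noteq> 0" and dP1: "degree P1 = 2" unfolding P1_def by (simp_all add: degree_mult_eq)
  define g where "g = f mod P1"
  have "degree g \<le> 1"
    using degree_mod_less[OF P10, of f] dP1 unfolding g_def by auto
  then have gf: "g = [:coeff g 0, coeff g 1:]" by (rule lin_poly)
  have fe: "f = g + P1 * (f div P1)" unfolding g_def
    using div_mult_mod_eq[of f P1] by (simp add: algebra_simps)
  have "poly P1 (- l1) = 0" "poly P1 (- l2) = 0" unfolding P1_def by simp_all
  then have "poly f (- l1) = poly g (- l1)" "poly f (- l2) = poly g (- l2)"
    by (subst fe, simp)+
  moreover have "poly g (- l1) - poly g (- l2) = (l2 - l1) * coeff g 1"
    by (subst gf, subst gf, simp add: algebra_simps)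
  moreover have "eqI P1 f = coeff g 1" unfolding eqI_def g_def dP1 by simp
  ultimately show ?thesis unfolding P1_def by simp
qed

lemma monom_pcompose_lin: "pcompose (monom 1 n) [:c, 1:] = [:c, 1::real:] ^ n"
  by (simp add: monom_altdef pcompose_power pcompose_pCons)

lemma monom_as_pcompose: "monom 1 n = pcompose ([:- c, 1:] ^ n) [:c, 1::real:]"
  by (simp add: pcompose_power pcompose_lin monom_altdef)

lemma coeff_lin_pow: "coeff ([:a, 1::real:] ^ n) j = real (n choose j) * a ^ (n - j)"
proof (cases "j \<le> n")
  case True then show ?thesis by (simp add: coeff_linear_poly_power)
next
  case False then show ?thesis by (simp add: coeff_eq_0 degree_linear_power)
qed

lemma P1_eq: "eqI ([:l, 1:] * [:l, 1:]) (monom 1 j) = real j * (- l) ^ (j - 1)"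
proof -
  have "[:l, 1:] * [:l, 1:] = pcompose (monom 1 2) [:l, 1::real:]"
    by (simp add: monom_pcompose_lin power2_eq_square)
  then have "eqI ([:l, 1:] * [:l, 1:]) (monom 1 j)
       = eqI (pcompose (monom 1 2) [:l, 1:]) (pcompose ([:- l, 1:] ^ j) [:l, 1:])"
    by (simp add: monom_as_pcompose[symmetric])
  also have "\<dots> = eqI (monom 1 2) ([:- l, 1:] ^ j)"
    by (rule eqI_shift) (simp add: degree_monom_eq)
  also have "\<dots> = coeff ([:- l, 1:] ^ j) 1" by (simp add: eqI_monom)
  also have "\<dots> = real j * (- l) ^ (j - 1)" by (simp add: coeff_lin_pow)
  finally show ?thesis .
qed

lemma monic_pcomp: "lead_coeff p = 1 \<Longrightarrow> lead_coeff (pcompose p [:c, 1::real:]) = 1"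
  by (subst lead_coeff_comp) auto

lemma TU:
  assumes "d \<ge> 1"
  shows "eqI (rel_poly (d - 1) m l1 l2) ([:- l1, 1:] ^ n)
       = eqI (rel_poly d m l1 l2) (monom 1 n * [:real d * l2, 1:] ^ m)"
  by (simp add: shift_pow rel_monic rel_split1[OF assms] eqI_mult_right monic_pcomp lead_coeff_power)

lemma TV:
  assumes "d \<ge> 1"
  shows "eqI (rel_poly (d - 1) m l1 l2) ([:- l2, 1:] ^ n)
       = eqI (rel_poly d m l1 l2) (monom 1 n * [:real d * l1, 1:] ^ m)"
  by (simp add: shift_pow rel_monic rel_split2[OF assms] eqI_mult_right monic_pcomp lead_coeff_power)



definition Sq :: "nat \<Rightarrow> real \<Rightarrow> real \<Rightarrow> nat \<Rightarrow> real poly" where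
  "Sq d l1 l2 r = (\<Sum>i\<le>r. [:real d * l2, 1:] ^ i * [:real d * l1, 1:] ^ (r - i))"

definition Apol :: "nat \<Rightarrow> real \<Rightarrow> real \<Rightarrow> nat \<Rightarrow> nat \<Rightarrow> real poly" where
  "Apol d l1 l2 k r = (if k = 0 then smult (real d) (Sq d l1 l2 r)
      else [:real d * l2, 1:] ^ (r + 1) - smult (real d * l2) (Sq d l1 l2 r))"

lemma Sq_diff:
  "[:real d * l2, 1:] ^ (r + 1) - [:real d * l1, 1:] ^ (r + 1) = smult (real d * (l2 - l1)) (Sq d l1 l2 r)"
proof -
  let ?U = "[:real d * l2, 1:]" and ?V = "[:real d * l1, 1:]"
  have "?U ^ (r + 1) - ?V ^ (r + 1) = (?U - ?V) * (\<Sum>i<r + 1. ?V ^ (r + 1 - Suc i) * ?U ^ i)"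
    by (rule power_diff_sumr2)
  also have "?U - ?V = [:real d * (l2 - l1):]" by (simp add: algebra_simps)
  also have "(\<Sum>i<r + 1. ?V ^ (r + 1 - Suc i) * ?U ^ i) = Sq d l1 l2 r"
    unfolding Sq_def by (rule sum.cong) (auto simp: mult.commute)
  finally show ?thesis by simp
qed

lemma Apol_dist:
  assumes "k \<le> 1"
  shows "smult (l2 - l1) (Apol d l1 l2 k r)
     = smult ((- l1) ^ k) ([:real d * l2, 1:] ^ (r + 1)) - smult ((- l2) ^ k) ([:real d * l1, 1:] ^ (r + 1))"
proof (cases "k = 0")
  case True
  then show ?thesis using Sq_diff[of d l2 r l1] by (simp add: Apol_def algebra_simps)
next
  case False
  then have k: "k = 1" using assms by simp
  have eq: "(l2 - l1) * (real d * l2) = l2 * (real d * (l2 - l1))" by (simp add: algebra_simps)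
  have aux: "smult (l2 - l1) x - smult l2 (x - y) = smult (- l1) x - smult (- l2) (y::real poly)" for x y
    by (simp add: smult_diff_right smult_diff_left)
  have "smult (l2 - l1) (Apol d l1 l2 k r)
      = smult (l2 - l1) ([:real d * l2, 1:] ^ (r + 1)) - smult l2 (smult (real d * (l2 - l1)) (Sq d l1 l2 r))"
    using k by (simp only: Apol_def smult_diff_right smult_smult eq one_neq_zero if_False)
  also have "\<dots> = smult (l2 - l1) ([:real d * l2, 1:] ^ (r + 1))
       - smult l2 ([:real d * l2, 1:] ^ (r + 1) - [:real d * l1, 1:] ^ (r + 1))"
    by (simp only: Sq_diff)
  also have "\<dots> = smult ((- l1) ^ k) ([:real d * l2, 1:] ^ (r + 1)) - smult ((- l2) ^ k) ([:real d * l1, 1:] ^ (r + 1))"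
    using k by (simp only: aux power_one_right)
  finally show ?thesis .
qed

lemma src_eqI:
  "src_integral r d k m l1 l2 = (\<Sum>i\<le>m. real (m choose i) * eqI ([:l1, 1:] * [:l2, 1:]) (monom 1 (k + i))
       * eqI (rel_poly (d - 1) (r + 1) l1 l2) (monom 1 (m - i)))"
  unfolding src_integral_def eq_integral_eqI P1_form ..

lemma main_neq:
  assumes "d \<ge> 1" "k \<le> 1" "l1 \<noteq> l2"
  shows "eq_integral d (r + 1) l1 l2 (Apol d l1 l2 k r * monom 1 m) = src_integral r d k m l1 l2"
proof -
  let ?P2 = "rel_poly (d - 1) (r + 1) l1 l2" and ?P = "rel_poly d (r + 1) l1 l2"
  let ?P1 = "[:l1, 1:] * [:l2, 1:]"
  let ?c = "\<lambda>j. eqI ?P2 (monom 1 j)"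
  have s: "(l2 - l1) * eqI ?P1 (monom 1 j) = (- l1) ^ j - (- l2) ^ j" for j
    using P1_dist[of l2 l1 "monom 1 j"] by (simp add: poly_monom)
  have "(l2 - l1) * src_integral r d k m l1 l2
     = (\<Sum>i\<le>m. real (m choose i) * ((l2 - l1) * eqI ?P1 (monom 1 (k + i))) * ?c (m - i))"
    unfolding src_eqI sum_distrib_left by (rule sum.cong) (auto simp: ac_simps)
  also have "\<dots> = (\<Sum>i\<le>m. (- l1) ^ k * (real (m choose i) * (- l1) ^ i * ?c (m - i))
                   - (- l2) ^ k * (real (m choose i) * (- l2) ^ i * ?c (m - i)))"
    unfolding s by (rule sum.cong) (auto simp: power_add algebra_simps)
  also have "\<dots> = (- l1) ^ k * eqI ?P2 ([:- l1, 1:] ^ m) - (- l2) ^ k * eqI ?P2 ([:- l2, 1:] ^ m)"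
    by (simp add: lin_pow_expand sum_subtractf sum_distrib_left)
  also have "\<dots> = (- l1) ^ k * eqI ?P (monom 1 m * [:real d * l2, 1:] ^ (r + 1))
                - (- l2) ^ k * eqI ?P (monom 1 m * [:real d * l1, 1:] ^ (r + 1))"
    by (simp only: TU[OF assms(1)] TV[OF assms(1)])
  also have "\<dots> = eqI ?P (monom 1 m * (smult ((- l1) ^ k) ([:real d * l2, 1:] ^ (r + 1))
                   - smult ((- l2) ^ k) ([:real d * l1, 1:] ^ (r + 1))))"
    by (simp only: right_diff_distrib mult_smult_right eqI_diff eqI_smult)
  also have "\<dots> = eqI ?P (monom 1 m * smult (l2 - l1) (Apol d l1 l2 k r))"
    by (simp only: Apol_dist[OF assms(2)])
  also have "\<dots> = (l2 - l1) * eqI ?P (Apol d l1 l2 k r * monom 1 m)"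
    by (simp only: mult_smult_right eqI_smult mult.commute[of "monom 1 m" "Apol d l1 l2 k r"])
  finally show ?thesis using assms(3) by (simp add: eq_integral_eqI)
qed



lemma rel_eq: "rel_poly d m l l = [:real d * l, 1:] ^ (m * (d + 1))"
proof -
  have "rel_poly d m l l = (\<Prod>j\<in>{0..d}. [:real d * l, 1:] ^ m)"
    unfolding rel_poly_def
  proof (rule prod.cong)
    fix j assume "j \<in> {0..d}"
    then have "real (d - j) + real j = real d" by (simp add: of_nat_diff)
    then have "wt d l l j = real d * l" unfolding wt_def by (metis distrib_right)
    then show "[:wt d l l j, 1:] ^ m = [:real d * l, 1:] ^ m" by simp
  qed simp
  also have "\<dots> = ([:real d * l, 1:] ^ m) ^ (d + 1)" by simp
  also have "\<dots> = [:real d * l, 1:] ^ (m * (d + 1))" by (simp only: power_mult)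
  finally show ?thesis .
qed

lemma X_pow: "[:0, 1::real:] ^ b = monom 1 b"
  by (simp add: monom_altdef)

lemma eqI_linpow:
  assumes "N > 0"
  shows "eqI ([:c, 1:] ^ N) g = coeff (pcompose g [:- c, 1:]) (N - 1)"
proof -
  have g: "g = pcompose (pcompose g [:- c, 1:]) [:c, 1:]"
    by (simp add: pcompose_assoc[symmetric] pcompose_lin)
  have "eqI ([:c, 1:] ^ N) g = eqI (pcompose (monom 1 N) [:c, 1:]) (pcompose (pcompose g [:- c, 1:]) [:c, 1:])"
    by (simp only: monom_pcompose_lin g[symmetric])
  also have "\<dots> = eqI (monom 1 N) (pcompose g [:- c, 1:])"
    by (rule eqI_shift) (simp add: degree_monom_eq)
  also have "\<dots> = coeff (pcompose g [:- c, 1:]) (N - 1)" using assms by (simp add: eqI_monom)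
  finally show ?thesis .
qed

lemma pc_prod: "pcompose (monom 1 a * [:c, 1:] ^ b) [:- c, 1:] = monom 1 b * [:- c, 1::real:] ^ a"
  by (simp add: pcompose_mult monom_pcompose_lin pcompose_power pcompose_lin X_pow mult.commute)

lemma key:
  assumes "d \<ge> 1"
  shows "real m * eqI (rel_poly d (r + 1) l l) (monom 1 (m - 1) * [:real d * l, 1:] ^ (r + 1))
       = real d * real (r + 1) * eqI (rel_poly d (r + 1) l l) (monom 1 m * [:real d * l, 1:] ^ r)"
proof -
  define c where "c = real d * l"
  define N where "N = (r + 1) * (d + 1)"
  define K where "K = d * (r + 1)"
  have K1: "K \<ge> 1" using assms unfolding K_def by simp
  have N0: "N > 0" unfolding N_def by simp
  have NK: "N - 1 = K + r" unfolding N_def K_def by (simp add: algebra_simps)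
  have P: "rel_poly d (r + 1) l l = [:c, 1:] ^ N" unfolding c_def N_def by (rule rel_eq)
  have "eqI (rel_poly d (r + 1) l l) (monom 1 (m - 1) * [:c, 1:] ^ (r + 1))
      = coeff (monom 1 (r + 1) * [:- c, 1:] ^ (m - 1)) (N - 1)"
    unfolding P by (simp only: eqI_linpow[OF N0] pc_prod)
  also have "\<dots> = coeff ([:- c, 1:] ^ (m - 1)) (K - 1)"
  proof -
    have "\<not> (N - 1 < r + 1)" "N - 1 - (r + 1) = K - 1" using K1 NK by auto
    then show ?thesis by (simp only: coeff_monom_mult if_False mult_1)
  qed
  also have "\<dots> = real ((m - 1) choose (K - 1)) * (- c) ^ (m - K)"
    using K1 by (simp add: coeff_lin_pow diff_diff_eq2)
  finally have L: "eqI (rel_poly d (r + 1) l l) (monom 1 (m - 1) * [:c, 1:] ^ (r + 1))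
      = real ((m - 1) choose (K - 1)) * (- c) ^ (m - K)" .
  have "eqI (rel_poly d (r + 1) l l) (monom 1 m * [:c, 1:] ^ r)
      = coeff (monom 1 r * [:- c, 1:] ^ m) (N - 1)"
    unfolding P by (simp only: eqI_linpow[OF N0] pc_prod)
  also have "\<dots> = coeff ([:- c, 1:] ^ m) K"
  proof -
    have "\<not> (N - 1 < r)" "N - 1 - r = K" using K1 NK by auto
    then show ?thesis by (simp only: coeff_monom_mult if_False mult_1)
  qed
  also have "\<dots> = real (m choose K) * (- c) ^ (m - K)"
    by (simp add: coeff_lin_pow)
  finally have R: "eqI (rel_poly d (r + 1) l l) (monom 1 m * [:c, 1:] ^ r)
      = real (m choose K) * (- c) ^ (m - K)" .
  have B: "real K * real (m choose K) = real m * real ((m - 1) choose (K - 1))"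
    using times_binomial_minus1_eq[of K m] K1 by (metis of_nat_mult zero_less_one le_trans less_le_trans)
  have Kr: "real K = real d * real (r + 1)" unfolding K_def by (simp add: algebra_simps)
  have "real m * (real ((m - 1) choose (K - 1)) * (- c) ^ (m - K))
      = (real m * real ((m - 1) choose (K - 1))) * (- c) ^ (m - K)" by (simp only: mult.assoc)
  also have "\<dots> = (real K * real (m choose K)) * (- c) ^ (m - K)" by (simp only: B)
  also have "\<dots> = real d * real (r + 1) * (real (m choose K) * (- c) ^ (m - K))"
    by (simp only: Kr mult.assoc)
  finally show ?thesis unfolding c_def[symmetric] L R .
qed



lemma Sq_eq: "Sq d l l r = smult (real (r + 1)) ([:real d * l, 1:] ^ r)"
proof -
  define U where "U = [:real d * l, 1:]"
  have "Sq d l l r = (\<Sum>i\<le>r. U ^ r)"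
    unfolding Sq_def U_def[symmetric] by (rule sum.cong) (auto simp: power_add[symmetric])
  also have "\<dots> = smult (real (r + 1)) (U ^ r)" by (simp add: of_nat_poly)
  finally show ?thesis unfolding U_def .
qed

lemma T2_sum:
  "(\<Sum>i\<le>m. real (m choose i) * (real i * (- l) ^ (i - 1)) * eqI P (monom 1 (m - i)))
     = real m * eqI P ([:- l, 1:] ^ (m - 1))"
proof (cases m)
  case 0 then show ?thesis by simp
next
  case (Suc n)
  have "(\<Sum>i\<le>m. real (m choose i) * (real i * (- l) ^ (i - 1)) * eqI P (monom 1 (m - i)))
      = (\<Sum>i\<le>n. real (Suc n choose Suc i) * (real (Suc i) * (- l) ^ i) * eqI P (monom 1 (n - i)))"
    unfolding Suc by (subst sum.atMost_Suc_shift) simp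
  also have "\<dots> = (\<Sum>i\<le>n. real (Suc n) * (real (n choose i) * (- l) ^ i * eqI P (monom 1 (n - i))))"
  proof (rule sum.cong[OF refl])
    fix i
    have "real (Suc n choose Suc i) * real (Suc i) = real (Suc n) * real (n choose i)"
      using Suc_times_binomial[of i n] by (metis of_nat_mult mult.commute)
    then show "real (Suc n choose Suc i) * (real (Suc i) * (- l) ^ i) * eqI P (monom 1 (n - i))
        = real (Suc n) * (real (n choose i) * (- l) ^ i * eqI P (monom 1 (n - i)))"
      by (metis (no_types, lifting) mult.assoc)
  qed
  also have "\<dots> = real m * eqI P ([:- l, 1:] ^ (m - 1))"
    unfolding Suc by (simp add: lin_pow_expand sum_distrib_left)
  finally show ?thesis .
qed

lemma main_eq:
  assumes "d \<ge> 1" "k \<le> 1"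
  shows "eq_integral d (r + 1) l l (Apol d l l k r * monom 1 m) = src_integral r d k m l l"
proof -
  define P2 where "P2 = rel_poly (d - 1) (r + 1) l l"
  define P where "P = rel_poly d (r + 1) l l"
  define U where "U = [:real d * l, 1:]"
  define T where "T n = eqI P2 ([:- l, 1:] ^ n)" for n
  have TUm: "T n = eqI P (monom 1 n * U ^ (r + 1))" for n
    unfolding T_def P2_def P_def U_def by (rule TU[OF assms(1)])
  have K: "real m * eqI P (monom 1 (m - 1) * U ^ (r + 1)) = real d * real (r + 1) * eqI P (monom 1 m * U ^ r)"
    unfolding P_def U_def by (rule key[OF assms(1)])
  have T2: "(\<Sum>i\<le>m. real (m choose i) * (real i * (- l) ^ (i - 1)) * eqI P2 (monom 1 (m - i)))
     = real m * T (m - 1)" unfolding T_def by (rule T2_sum)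
  have src: "src_integral r d k m l l = (\<Sum>i\<le>m. real (m choose i) * (real (k + i) * (- l) ^ (k + i - 1))
       * eqI P2 (monom 1 (m - i)))"
    unfolding src_eqI P1_eq P2_def ..
  have Ap: "Apol d l l k r = (if k = 0 then smult (real d * real (r + 1)) (U ^ r)
      else U ^ (r + 1) - smult (real d * l * real (r + 1)) (U ^ r))"
    unfolding Apol_def Sq_eq U_def by simp
  show ?thesis
  proof (cases "k = 0")
    case True
    have "eq_integral d (r + 1) l l (Apol d l l k r * monom 1 m) = real d * real (r + 1) * eqI P (monom 1 m * U ^ r)"
      unfolding eq_integral_eqI P_def[symmetric] Ap using True by (simp add: eqI_smult mult.commute)
    also have "\<dots> = real m * T (m - 1)" using K TUm by simp
    also have "\<dots> = src_integral r d k m l l" unfolding src T2[symmetric] using True by simp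
    finally show ?thesis .
  next
    case False
    then have k: "k = 1" using assms(2) by simp
    have "eq_integral d (r + 1) l l (Apol d l l k r * monom 1 m)
        = eqI P (monom 1 m * U ^ (r + 1)) - l * (real d * real (r + 1) * eqI P (monom 1 m * U ^ r))"
    proof -
      have "eq_integral d (r + 1) l l (Apol d l l k r * monom 1 m)
          = eqI P ((U ^ (r + 1) - smult (real d * l * real (r + 1)) (U ^ r)) * monom 1 m)"
        unfolding eq_integral_eqI P_def[symmetric] Ap using k by simp
      also have "\<dots> = eqI P (monom 1 m * U ^ (r + 1)) - (real d * l * real (r + 1)) * eqI P (monom 1 m * U ^ r)"
        by (simp only: left_diff_distrib mult_smult_left eqI_diff eqI_smult
            mult.commute[of "U ^ (r + 1)" "monom 1 m"] mult.commute[of "U ^ r" "monom 1 m"])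
      finally show ?thesis by (simp add: algebra_simps)
    qed
    also have "\<dots> = T m + (- l) * (real m * T (m - 1))" using K TUm by simp
    also have "\<dots> = (\<Sum>i\<le>m. real (m choose i) * (- l) ^ i * eqI P2 (monom 1 (m - i)))
        + (- l) * (\<Sum>i\<le>m. real (m choose i) * (real i * (- l) ^ (i - 1)) * eqI P2 (monom 1 (m - i)))"
      unfolding T2 T_def by (simp add: lin_pow_expand)
    also have "\<dots> = (\<Sum>i\<le>m. real (m choose i) * (real (k + i) * (- l) ^ (k + i - 1)) * eqI P2 (monom 1 (m - i)))"
      unfolding sum_distrib_left sum.distrib[symmetric]
    proof (rule sum.cong[OF refl])
      fix i
      have E: "real (k + i) * (- l) ^ (k + i - 1) = (- l) ^ i + (- l) * (real i * (- l) ^ (i - 1))"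
        using k by (cases i) (simp_all add: algebra_simps)
      show "real (m choose i) * (- l) ^ i * eqI P2 (monom 1 (m - i)) +
          - l * (real (m choose i) * (real i * (- l) ^ (i - 1)) * eqI P2 (monom 1 (m - i))) =
          real (m choose i) * (real (k + i) * (- l) ^ (k + i - 1)) * eqI P2 (monom 1 (m - i))"
        unfolding E by (simp only: distrib_left distrib_right mult.assoc mult.left_commute)
    qed
    also have "\<dots> = src_integral r d k m l l" unfolding src ..
    finally show ?thesis .
  qed
qed



lemma main_all:
  assumes "d \<ge> 1" "k \<le> 1"
  shows "eq_integral d (r + 1) l1 l2 (Apol d l1 l2 k r * monom 1 m) = src_integral r d k m l1 l2"
proof (cases "l1 = l2")
  case True then show ?thesis using main_eq[OF assms] by simp
next
  case False then show ?thesis using main_neq[OF assms] by simp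
qed

lemma uniq:
  fixes a P :: "real poly"
  assumes P: "lead_coeff P = 1" and da: "degree a < degree P"
    and z: "\<And>m. m \<le> degree P - 1 \<Longrightarrow> eqI P (a * monom 1 m) = 0"
  shows "a = 0"
proof (rule ccontr)
  assume a0: "a \<noteq> 0"
  define m where "m = degree P - 1 - degree a"
  have dm: "degree (a * monom 1 m) = degree P - 1"
    using a0 da unfolding m_def by (simp add: degree_mult_eq degree_monom_eq)
  then have "(a * monom 1 m) mod P = a * monom 1 m"
    using da by (intro mod_poly_less) simp
  then have "eqI P (a * monom 1 m) = coeff (a * monom 1 m) (degree P - 1)"
    unfolding eqI_def by simp
  also have "\<dots> = lead_coeff (a * monom 1 m)" using dm by simp
  also have "\<dots> = lead_coeff a" by (simp add: lead_coeff_mult degree_monom_eq)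
  finally have "eqI P (a * monom 1 m) \<noteq> 0" using a0 by simp
  moreover have "m \<le> degree P - 1" unfolding m_def by simp
  ultimately show False using z by blast
qed

lemma Sq_degree: "degree (Sq d l1 l2 r) \<le> r"
  unfolding Sq_def
proof (rule degree_sum_le)
  show "finite {..r}" by simp
next
  fix i assume "i \<in> {..r}"
  then have "degree ([:real d * l2, 1:] ^ i * [:real d * l1, 1:] ^ (r - i)) \<le> i + (r - i)"
    using degree_mult_le[of "[:real d * l2, 1:] ^ i" "[:real d * l1, 1:] ^ (r - i)"]
    by (simp add: degree_linear_power)
  then show "degree ([:real d * l2, 1:] ^ i * [:real d * l1, 1:] ^ (r - i)) \<le> r"
    using \<open>i \<in> {..r}\<close> by simp
qed

lemma Apol_degree: "degree (Apol d l1 l2 k r) \<le> r + 1"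
proof -
  have A: "degree (smult c (Sq d l1 l2 r)) \<le> r + 1" for c
    using degree_smult_le[of c "Sq d l1 l2 r"] Sq_degree[of d l1 l2 r] by simp
  have B: "degree ([:real d * l2, 1:] ^ (r + 1) - smult (real d * l2) (Sq d l1 l2 r)) \<le> r + 1"
    by (rule degree_diff_le[OF _ A]) (simp only: degree_linear_power order_refl)
  show ?thesis
  proof (cases "k = 0")
    case True then show ?thesis unfolding Apol_def using A by (simp only: if_True refl)
  next
    case False then show ?thesis unfolding Apol_def using B by (simp only: if_False)
  qed
qed

lemma alphaH_eq:
  assumes "d \<ge> 1" "k \<le> 1"
  shows "alphaH r d k l1 l2 = Apol d l1 l2 k r"
  unfolding alphaH_def
proof (rule the_equality)
  have dim: "proj_dim d (r + 1) \<ge> r + 1" using assms(1) unfolding proj_dim_def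
    by (simp add: algebra_simps)
  show "degree (Apol d l1 l2 k r) \<le> proj_dim d (r + 1) \<and>
    (\<forall>m\<le>proj_dim d (r + 1). eq_integral d (r + 1) l1 l2 (Apol d l1 l2 k r * monom 1 m) = src_integral r d k m l1 l2)"
    using Apol_degree[of d l1 l2 k r] dim main_all[OF assms] by auto
next
  fix a
  assume H: "degree a \<le> proj_dim d (r + 1) \<and>
    (\<forall>m\<le>proj_dim d (r + 1). eq_integral d (r + 1) l1 l2 (a * monom 1 m) = src_integral r d k m l1 l2)"
  define P where "P = rel_poly d (r + 1) l1 l2"
  have dP: "degree P = proj_dim d (r + 1) + 1" unfolding P_def rel_degree proj_dim_def by simp
  have dim: "proj_dim d (r + 1) \<ge> r + 1" using assms(1) unfolding proj_dim_def
    by (simp add: algebra_simps)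
  have "a - Apol d l1 l2 k r = 0"
  proof (rule uniq[of P])
    show "lead_coeff P = 1" unfolding P_def by (rule rel_monic)
    have "degree (a - Apol d l1 l2 k r) \<le> proj_dim d (r + 1)"
      using H Apol_degree[of d l1 l2 k r] dim degree_diff_le by (metis le_trans)
    then show "degree (a - Apol d l1 l2 k r) < degree P" using dP by simp
  next
    fix m assume "m \<le> degree P - 1"
    then have m: "m \<le> proj_dim d (r + 1)" using dP by simp
    show "eqI P ((a - Apol d l1 l2 k r) * monom 1 m) = 0"
      using H m main_all[OF assms]
      by (simp add: left_diff_distrib eqI_diff P_def eq_integral_eqI)
  qed
  then show "a = Apol d l1 l2 k r" by simp
qed



lemma poly_Apol0: "poly (Apol d l1 l2 0 n) x = real d * (\<Sum>i\<le>n. (real d * l2 + x) ^ i * (real d * l1 + x) ^ (n - i))"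
  by (simp add: Apol_def Sq_def poly_sum)

lemma poly_Apol1: "poly (Apol d l1 l2 1 n) x = (real d * l2 + x) ^ (n + 1)
     - real d * l2 * (\<Sum>i\<le>n. (real d * l2 + x) ^ i * (real d * l1 + x) ^ (n - i))"
  by (simp add: Apol_def Sq_def poly_sum ring_distribs)

lemma geo: "Abs_fps (\<lambda>n. (u::real) ^ n) * (1 - fps_const u * fps_X) = 1"
proof (rule fps_ext)
  fix n
  have "Abs_fps (\<lambda>n. u ^ n) * (1 - fps_const u * fps_X)
      = Abs_fps (\<lambda>n. u ^ n) - fps_X * (fps_const u * Abs_fps (\<lambda>n. u ^ n))"
    by (simp add: algebra_simps)
  then show "(Abs_fps (\<lambda>n. u ^ n) * (1 - fps_const u * fps_X)) $ n = (1 :: real fps) $ n"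
    by (cases n) simp_all
qed

lemma conv: "Abs_fps (\<lambda>n. \<Sum>i\<le>n. (u::real) ^ i * v ^ (n - i)) = Abs_fps (\<lambda>n. u ^ n) * Abs_fps (\<lambda>n. v ^ n)"
  by (rule fps_ext) (simp add: fps_mult_nth atLeast0AtMost)

lemma conv2: "Abs_fps (\<lambda>n. \<Sum>i\<le>n. (u::real) ^ i * v ^ (n - i)) * ((1 - fps_const u * fps_X) * (1 - fps_const v * fps_X)) = 1"
proof -
  have "Abs_fps (\<lambda>n. \<Sum>i\<le>n. (u::real) ^ i * v ^ (n - i)) * ((1 - fps_const u * fps_X) * (1 - fps_const v * fps_X))
     = (Abs_fps (\<lambda>n. u ^ n) * (1 - fps_const u * fps_X)) * (Abs_fps (\<lambda>n. v ^ n) * (1 - fps_const v * fps_X))"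
    by (simp only: conv ac_simps)
  then show ?thesis by (simp only: geo mult_1)
qed

lemma ring_aux:
  fixes b u v x :: "'a::comm_ring_1"
  shows "(1 + (b - u - v) * x) * (1 - b * x) + (u * v + (b - u - v) * b) * x ^ 2 = (1 - u * x) * (1 - v * x)"
  by (simp add: algebra_simps power2_eq_square)

lemma div_char:
  fixes S D N :: "real fps"
  assumes "S * D = N" "D $ 0 \<noteq> 0"
  shows "S = N / D"
proof -
  have "N / D = S * D * inverse D" using assms by (simp add: fps_divide_unit)
  also have "\<dots> = S * (D * inverse D)" by (simp only: mult.assoc)
  also have "\<dots> = S" using assms(2) by (simp add: inverse_mult_eq_1')
  finally show ?thesis by simp
qed



lemma ring_aux2:
  fixes V C x :: "'a::comm_ring_1"
  shows "1 - V * x - x * C = 1 + (- V - C) * x"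
  by (simp add: algebra_simps)

theorem mainTheorem8:
  fixes d :: nat and l1 l2 :: real
  assumes "odd d"
  defines "c1 \<equiv> - (l1 + l2)" and "c2 \<equiv> l1 * l2"
  defines "D \<equiv> (1 + fps_const (real (d - 1) / 2 * c1) * fps_X)
                 * (1 - fps_const (real (d + 1) / 2 * c1) * fps_X)
               + fps_const (real d ^ 2 * c2) * fps_X ^ 2"
  shows "Abs_fps (\<lambda>n. alpha n d 0 l1 l2) = fps_const (real d) / D
         \<and> Abs_fps (\<lambda>n. if n = 0 then 0 else alpha (n - 1) d 1 l1 l2)
           = (1 + fps_const (real (d - 1) / 2 * c1) * fps_X) / D - 1"
proof -
  have d1: "d \<ge> 1" using assms(1) by (cases d) auto
  define a where "a = real (d - 1) / 2 * c1"
  define b where "b = real (d + 1) / 2 * c1"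
  define q where "q = real d ^ 2 * c2"
  define u where "u = real d * l2 + b"
  define v where "v = real d * l1 + b"
  have rd: "real (d - 1) = real d - 1" using d1 by (simp add: of_nat_diff)
  have ra: "a = b - u - v" unfolding a_def b_def u_def v_def c1_def rd by (simp add: field_simps)
  have rq: "q = u * v + (b - u - v) * b"
    unfolding q_def b_def u_def v_def c1_def c2_def by (simp add: field_simps power2_eq_square)
  have ra2: "a = - v - real d * l2" unfolding a_def b_def v_def c1_def rd by (simp add: field_simps)
  have Da: "fps_const a = fps_const b - fps_const u - fps_const v" unfolding ra by simp
  have Dq: "fps_const q = fps_const u * fps_const v + (fps_const b - fps_const u - fps_const v) * fps_const b"
    unfolding rq by simp
  have DD: "D = (1 - fps_const u * fps_X) * (1 - fps_const v * fps_X)"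
    unfolding D_def a_def[symmetric] b_def[symmetric] q_def[symmetric] Da Dq by (rule ring_aux)
  have D0: "D $ 0 \<noteq> 0" unfolding DD by simp
  define Cv where "Cv = Abs_fps (\<lambda>n. \<Sum>i\<le>n. u ^ i * v ^ (n - i))"
  have CvD: "Cv * D = 1" unfolding Cv_def DD by (rule conv2)
  have al: "alpha n d k l1 l2 = poly (Apol d l1 l2 k n) b" if "k \<le> 1" for n k
    unfolding alpha_def alphaH_eq[OF d1 that] b_def c1_def ..
  have al0: "alpha n d 0 l1 l2 = real d * (\<Sum>i\<le>n. u ^ i * v ^ (n - i))" for n
    by (simp add: al poly_Apol0 u_def v_def)
  have al1: "alpha n d 1 l1 l2 = u ^ (n + 1) - real d * l2 * (\<Sum>i\<le>n. u ^ i * v ^ (n - i))" for n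
  proof -
    have "alpha n d 1 l1 l2 = poly (Apol d l1 l2 1 n) b" by (rule al) simp
    then show ?thesis by (simp only: poly_Apol1 u_def v_def)
  qed
  have S0: "Abs_fps (\<lambda>n. alpha n d 0 l1 l2) = fps_const (real d) * Cv"
    by (rule fps_ext) (simp add: al0 Cv_def)
  have part1: "Abs_fps (\<lambda>n. alpha n d 0 l1 l2) = fps_const (real d) / D"
  proof (rule div_char[OF _ D0])
    show "Abs_fps (\<lambda>n. alpha n d 0 l1 l2) * D = fps_const (real d)"
      unfolding S0 by (simp only: mult.assoc CvD mult_1_right)
  qed
  define S1 where "S1 = Abs_fps (\<lambda>n. if n = 0 then 0 else alpha (n - 1) d 1 l1 l2)"
  have S1e: "S1 + 1 = Abs_fps (\<lambda>n. u ^ n) - fps_X * (fps_const (real d * l2) * Cv)"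
  proof (rule fps_ext)
    fix n show "(S1 + 1) $ n = (Abs_fps (\<lambda>n. u ^ n) - fps_X * (fps_const (real d * l2) * Cv)) $ n"
      by (cases n) (simp_all add: S1_def al1[simplified] Cv_def)
  qed
  have "(S1 + 1) * D = (Abs_fps (\<lambda>n. u ^ n) * (1 - fps_const u * fps_X)) * (1 - fps_const v * fps_X)
        - fps_X * fps_const (real d * l2) * (Cv * D)"
    unfolding S1e by (simp only: DD algebra_simps)
  also have "\<dots> = 1 - fps_const v * fps_X - fps_X * fps_const (real d * l2)"
    by (simp only: geo CvD mult_1 mult_1_right)
  also have "\<dots> = 1 + (- fps_const v - fps_const (real d * l2)) * fps_X" by (rule ring_aux2)
  also have "- fps_const v - fps_const (real d * l2) = fps_const a" unfolding ra2 by simp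
  finally have "(S1 + 1) * D = 1 + fps_const a * fps_X" .
  then have "S1 + 1 = (1 + fps_const a * fps_X) / D" by (rule div_char[OF _ D0])
  then have part2: "S1 = (1 + fps_const a * fps_X) / D - 1" by (simp add: algebra_simps)
  show ?thesis using part1 part2 unfolding S1_def a_def by simp
qed

end
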